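(* For every $q\in(0,\frac12)$, \[ \sum_{n=2}^\infty q^{\sigma_\infty(n)}\le\frac{(2-q)q}{1-2q}. \]
   Context: $T$ is the Collatz map $T(n)=\frac{3n+1}2$ ($n$ odd), $T(n)=\frac n2$ ($n$ even); for a positive integer $n$, $\sigma_\infty(n)$ is the least $k\ge0$ with $T^k(n)=1$, and $\sigma_\infty(n)=\infty$ if no such $k$ exists. Convention: $q^\infty=0$ for $0<q<1$. *)

theory Defs
  imports Complex_Main "HOL-Library.Extended_Nat"
begin

definition collatzT :: "nat \<Rightarrow> nat" where
  "collatzT n = (if odd n then (3 * n + 1) div 2 else n div 2)"

definition sigma_inf :: "nat \<Rightarrow> enat" where
  "sigma_inf n = (if \<exists>k. (collatzT ^^ k) n = 1
                  then enat (LEAST k. (collatzT ^^ k) n = 1) else \<infinity>)"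

definition epow :: "real \<Rightarrow> enat \<Rightarrow> real" where
  "epow q s = (case s of enat k \<Rightarrow> q ^ k | \<infinity> \<Rightarrow> 0)"

end

theory Submission
  imports Defs
begin

definition Aset :: "nat \<Rightarrow> nat set" where
  "Aset k = {n. (collatzT ^^ Suc k) n = 1}"

lemma Aset0: "Aset 0 \<subseteq> {2}"
proof
  fix n assume "n \<in> Aset 0"
  hence h: "collatzT n = 1" by (simp add: Aset_def)
  show "n \<in> {2}"
  proof (cases "odd n")
    case True
    have "(3*n+1) div 2 = 1" using h True by (metis collatzT_def)
    hence False using True by presburger
    thus ?thesis ..
  next
    case False
    with h have "n div 2 = 1" by (simp add: collatzT_def)
    moreover have "n = 2 * (n div 2)" using False by simp
    ultimately have "n = 2" by simp
    thus ?thesis by simp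
  qed
qed

lemma Aset_Suc: "Aset (Suc k) \<subseteq> (\<lambda>m. 2*m) ` Aset k \<union> (\<lambda>m. (2*m-1) div 3) ` Aset k"
proof
  fix n assume "n \<in> Aset (Suc k)"
  hence "(collatzT ^^ Suc k) (collatzT n) = 1"
    unfolding Aset_def by (simp only: mem_Collect_eq funpow_Suc_right o_apply)
  hence m: "collatzT n \<in> Aset k" by (simp add: Aset_def)
  show "n \<in> (\<lambda>m. 2*m) ` Aset k \<union> (\<lambda>m. (2*m-1) div 3) ` Aset k"
  proof (cases "odd n")
    case True
    then obtain j where j: "n = 2*j+1" by (rule oddE)
    have "collatzT n = 3*j+2" using True j by (simp add: collatzT_def)
    hence "n = (2 * collatzT n - 1) div 3" using j by simp
    thus ?thesis using m by blast
  next
    case False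
    hence "n = 2 * collatzT n" unfolding collatzT_def by simp
    thus ?thesis using m by blast
  qed
qed

lemma Aset_card: "finite (Aset k) \<and> card (Aset k) \<le> 2^k"
proof (induction k)
  case 0
  have "finite (Aset 0)" using Aset0 finite_subset by blast
  moreover have "card (Aset 0) \<le> card {2::nat}" using Aset0 by (intro card_mono) auto
  ultimately show ?case by simp
next
  case (Suc k)
  let ?B = "(\<lambda>m. 2*m) ` Aset k \<union> (\<lambda>m. (2*m-1) div 3) ` Aset k"
  have fB: "finite ?B" using Suc by auto
  have "card ?B \<le> card ((\<lambda>m. 2*m) ` Aset k) + card ((\<lambda>m. (2*m-1) div 3) ` Aset k)"
    by (rule card_Un_le)
  also have "\<dots> \<le> card (Aset k) + card (Aset k)"
    by (intro add_mono card_image_le) (use Suc in auto)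
  also have "\<dots> \<le> 2^Suc k" using Suc by simp
  finally have cB: "card ?B \<le> 2^Suc k" .
  have "card (Aset (Suc k)) \<le> card ?B" by (rule card_mono[OF fB Aset_Suc])
  moreover have "finite (Aset (Suc k))" by (rule finite_subset[OF Aset_Suc fB])
  ultimately show ?case using cB by simp
qed

lemma sigma_enat:
  assumes "sigma_inf n = enat k"
  shows "(collatzT ^^ k) n = 1"
proof (cases "\<exists>k. (collatzT ^^ k) n = 1")
  case True
  hence "sigma_inf n = enat (LEAST k. (collatzT ^^ k) n = 1)" by (simp add: sigma_inf_def)
  hence "k = (LEAST k. (collatzT ^^ k) n = 1)" using assms by simp
  moreover have "(collatzT ^^ (LEAST k. (collatzT ^^ k) n = 1)) n = 1"
    using True by (rule LeastI_ex)
  ultimately show ?thesis by simp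
next
  case False
  hence "sigma_inf n = \<infinity>" by (simp add: sigma_inf_def)
  thus ?thesis using assms by simp
qed

lemma partial_bound:
  fixes q :: real
  assumes q0: "0 < q" and q1: "q < 1/2"
  shows "(\<Sum>n<N. epow q (sigma_inf (n + 2))) \<le> q / (1 - 2*q)"
proof -
  define g where "g n = (case sigma_inf (n+2) of enat k \<Rightarrow> k | \<infinity> \<Rightarrow> 0)" for n
  define M where "M = (\<Sum>n<N. g n)"
  define P where "P k n = ((collatzT ^^ k) (n+2) = 1)" for k n
  have hterm: "epow q (sigma_inf (n + 2)) \<le> (\<Sum>k\<in>{1..M}. q^k * (if P k n then 1 else 0))"
    if n: "n < N" for n
  proof (cases "sigma_inf (n+2)")
    case (enat k)
    have Pk: "P k n" using sigma_enat[OF enat] by (simp add: P_def)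
    have "k \<noteq> 0" using Pk by (cases k) (auto simp: P_def)
    moreover have "k \<le> M"
    proof -
      have "g n = k" using enat by (simp add: g_def)
      moreover have "g n \<le> (\<Sum>n<N. g n)" by (rule member_le_sum) (use n in auto)
      ultimately show ?thesis by (simp add: M_def)
    qed
    ultimately have kin: "k \<in> {1..M}" by simp
    have "epow q (sigma_inf (n + 2)) = q^k * (if P k n then 1 else 0)"
      using enat Pk by (simp add: epow_def)
    also have "\<dots> \<le> (\<Sum>k\<in>{1..M}. q^k * (if P k n then 1 else 0))"
      by (rule member_le_sum[OF kin]) (use q0 in auto)
    finally show ?thesis .
  next
    case infinity
    thus ?thesis by (simp add: epow_def) (intro sum_nonneg, use q0 in auto)
  qed
  have "(\<Sum>n<N. epow q (sigma_inf (n + 2))) \<le> (\<Sum>n<N. \<Sum>k\<in>{1..M}. q^k * (if P k n then 1 else 0))"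
    by (intro sum_mono hterm) auto
  also have "\<dots> = (\<Sum>k\<in>{1..M}. q^k * (\<Sum>n<N. (if P k n then 1 else 0)))"
    by (subst sum.swap) (simp add: sum_distrib_left)
  also have "\<dots> = (\<Sum>k\<in>{1..M}. q^k * real (card {n\<in>{..<N}. P k n}))"
    by (simp add: sum.If_cases Int_def conj_commute)
  also have "\<dots> \<le> (\<Sum>k\<in>{1..M}. q^k * 2^(k-1))"
  proof (intro sum_mono mult_left_mono)
    fix k assume k: "k \<in> {1..M}"
    then obtain j where kj: "k = Suc j" by (cases k) auto
    have inj: "inj_on (\<lambda>n. n+2) {n\<in>{..<N}. P k n}" by (auto simp: inj_on_def)
    have sub: "(\<lambda>n. n+2) ` {n\<in>{..<N}. P k n} \<subseteq> Aset j" by (auto simp: P_def Aset_def kj)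
    have "card {n\<in>{..<N}. P k n} = card ((\<lambda>n. n+2) ` {n\<in>{..<N}. P k n})"
      using card_image[OF inj] by simp
    also have "\<dots> \<le> card (Aset j)" using sub Aset_card[of j] card_mono by blast
    also have "\<dots> \<le> 2^j" using Aset_card[of j] by simp
    finally have "card {n\<in>{..<N}. P k n} \<le> (2::nat)^(k-1)" using kj by simp
    thus "real (card {n\<in>{..<N}. P k n}) \<le> 2^(k-1)"
      by (metis of_nat_le_iff of_nat_numeral of_nat_power)
  qed (use q0 in auto)
  also have "\<dots> = (\<Sum>j<M. q * (2*q)^j)"
  proof -
    have "(\<Sum>k\<in>{1..M}. q^k * 2^(k-1)) = (\<Sum>j\<in>{0..<M}. q^Suc j * 2^j)"
      by (rule sum.reindex_bij_witness[of _ Suc "\<lambda>k. k - 1"]) auto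
    also have "\<dots> = (\<Sum>j<M. q * (2*q)^j)"
      by (intro sum.cong) (auto simp: power_mult_distrib)
    finally show ?thesis .
  qed
  also have "\<dots> = q * (\<Sum>j<M. (2*q)^j)" by (simp add: sum_distrib_left)
  also have "\<dots> \<le> q * (1 / (1 - 2*q))"
  proof (intro mult_left_mono)
    have "(\<Sum>j<M. (2*q)^j) = (1 - (2*q)^M) / (1 - 2*q)"
      using q1 by (subst sum_gp_strict) auto
    also have "\<dots> \<le> 1 / (1 - 2*q)"
      using q0 q1 by (intro divide_right_mono) auto
    finally show "(\<Sum>j<M. (2*q)^j) \<le> 1 / (1 - 2*q)" .
  qed (use q0 in auto)
  finally show ?thesis by simp
qed

theorem mainTheorem13:
  fixes q :: real
  assumes "0 < q" and "q < 1/2"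
  shows "summable (\<lambda>n. epow q (sigma_inf (n + 2)))
         \<and> (\<Sum>n. epow q (sigma_inf (n + 2))) \<le> (2 - q) * q / (1 - 2 * q)"
proof -
  have nn: "0 \<le> epow q (sigma_inf (n + 2))" for n
    using assms by (auto simp: epow_def split: enat.splits)
  have pb: "(\<Sum>n<N. epow q (sigma_inf (n + 2))) \<le> q / (1 - 2*q)" for N
    using partial_bound[OF assms] .
  have s: "summable (\<lambda>n. epow q (sigma_inf (n + 2)))"
    by (rule summableI_nonneg_bounded[OF nn pb])
  have "(\<Sum>n. epow q (sigma_inf (n + 2))) \<le> q / (1 - 2*q)"
    using suminf_le_const[OF s] pb by blast
  also have "\<dots> \<le> (2 - q) * q / (1 - 2 * q)"
    using assms by (intro divide_right_mono) (auto simp: algebra_simps)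
  finally show ?thesis using s by simp
qed

end
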